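(* Let $1\le k\le d$ be fixed. Then: (a) $0\le\mu_k(\rho)\le\log k$ for all $d$-dimensional states $\rho$; (b) $\mu_k(\rho)=\inf\{\nu:\ \Pi_I\rho\Pi_I\le2^\nu\Delta(\rho)\ \text{for all } I\subseteq[d] \text{ with } |I|\le k\}$; (c) $\mu_k$ is monotone under SIO: $\mu_k(\Lambda(\rho))\le\mu_k(\rho)$ for every SIO $\Lambda$ and every state $\rho$; (d) $\mu_k$ is lower semicontinuous.
   Context: Fixed computational basis $\{|i\rangle\}_{i=1}^d$; $\Delta(X)=\sum_i|i\rangle\langle i|X|i\rangle\langle i|$; $\Pi_I=\sum_{i\in I}|i\rangle\langle i|$; logs base 2; $\|\cdot\|_\infty$ is the operator norm. $R^\rho=\Delta(\rho)^{-1/2}\rho\,\Delta(\rho)^{-1/2}$ with the inverse taken on the support, and $\mu_k(\rho)=\max_{I\subseteq[d],|I|\le k}\log\|\Pi_IR^\rho\Pi_I\|_\infty$. SIO (on $\mathbb C^d$): channels $\Lambda(X)=\sum_\alpha K_\alpha XK_\alpha^\dagger$ where each $K_\alpha$ and $K_\alpha^\dagger$ maps every computational basis vector to a multiple of a computational basis vector. *)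

theory Defs
  imports "HOL-Analysis.Analysis"
begin

text \<open>Matrices on \<open>\<complex>^d\<close> are \<open>complex^'n^'n\<close> with \<open>d = CARD('n)\<close>; the computational
  basis is \<open>axis i 1\<close>, \<open>i :: 'n\<close>.\<close>

type_synonym 'n cmat = "complex^'n^'n"

definition adj :: "'n::finite cmat \<Rightarrow> 'n cmat" where
  "adj A = (\<chi> i j. cnj (A $ j $ i))"

definition hermitian :: "'n::finite cmat \<Rightarrow> bool" where
  "hermitian A \<longleftrightarrow> adj A = A"

definition psd :: "'n::finite cmat \<Rightarrow> bool" where
  "psd A \<longleftrightarrow> hermitian A \<and> (\<forall>x::complex^'n. 0 \<le> Re (\<Sum>i\<in>UNIV. cnj (x $ i) * (A *v x) $ i))"

definition loewner_le :: "'n::finite cmat \<Rightarrow> 'n cmat \<Rightarrow> bool" where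
  "loewner_le A B \<longleftrightarrow> psd (B - A)"

definition ctrace :: "'n::finite cmat \<Rightarrow> complex" where
  "ctrace A = (\<Sum>i\<in>UNIV. A $ i $ i)"

definition is_state :: "'n::finite cmat \<Rightarrow> bool" where
  "is_state \<rho> \<longleftrightarrow> psd \<rho> \<and> ctrace \<rho> = 1"

definition Dephase :: "'n::finite cmat \<Rightarrow> 'n cmat" where
  "Dephase X = (\<chi> i j. if i = j then X $ i $ i else 0)"

definition Proj :: "'n::finite set \<Rightarrow> 'n cmat" where
  "Proj I = (\<chi> i j. if i = j \<and> i \<in> I then 1 else 0)"

text \<open>\<open>\<Delta>(\<rho>)^{-1/2}\<close> with the inverse taken on the support.\<close>
definition Dinvsqrt :: "'n::finite cmat \<Rightarrow> 'n cmat" where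
  "Dinvsqrt \<rho> = (\<chi> i j. if i = j \<and> Re (\<rho> $ i $ i) > 0
                          then complex_of_real (1 / sqrt (Re (\<rho> $ i $ i))) else 0)"

definition Rmat :: "'n::finite cmat \<Rightarrow> 'n cmat" where
  "Rmat \<rho> = Dinvsqrt \<rho> ** \<rho> ** Dinvsqrt \<rho>"

definition opnorm :: "'n::finite cmat \<Rightarrow> real" where
  "opnorm A = onorm (\<lambda>x::complex^'n. A *v x)"

text \<open>\<open>\<mu>_k(\<rho>) = max_{|I|\<le>k} log \<parallel>\<Pi>_I R \<Pi>_I\<parallel>\<close>, written as \<open>log\<close> of the maximum
  (log is monotone; this also handles the value \<open>-\<infinity>\<close> = log 0 of trivial blocks).\<close>
definition mu :: "nat \<Rightarrow> 'n::finite cmat \<Rightarrow> real" where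
  "mu k \<rho> = log 2 (Max ((\<lambda>I. opnorm (Proj I ** Rmat \<rho> ** Proj I)) ` {I. card I \<le> k}))"

definition incoh_kraus :: "'n::finite cmat \<Rightarrow> bool" where
  "incoh_kraus K \<longleftrightarrow> (\<forall>j. \<exists>i c. K *v axis j 1 = axis i c)"

definition SIO :: "('n::finite cmat \<Rightarrow> 'n cmat) \<Rightarrow> bool" where
  "SIO \<Lambda> \<longleftrightarrow> (\<exists>Ks :: 'n cmat list.
      (\<forall>K\<in>set Ks. incoh_kraus K \<and> incoh_kraus (adj K)) \<and>
      sum_list (map (\<lambda>K. adj K ** K) Ks) = mat 1 \<and>
      (\<forall>X. \<Lambda> X = sum_list (map (\<lambda>K. K ** X ** adj K) Ks)))"

definition lsc_on :: "'a::topological_space set \<Rightarrow> ('a \<Rightarrow> real) \<Rightarrow> bool" where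
  "lsc_on S f \<longleftrightarrow> (\<forall>x\<in>S. \<forall>t. t < f x \<longrightarrow> (\<forall>\<^sub>F y in at x within S. t < f y))"

end

theory Submission imports Defs begin

lemma inner_cvec: "inner (x::complex^'n::finite) y = Re (\<Sum>i\<in>UNIV. cnj (x$i) * y$i)"
  by (simp add: inner_vec_def inner_complex_def Re_sum)

lemma psd_iff: "psd A \<longleftrightarrow> hermitian A \<and> (\<forall>x. 0 \<le> inner x (A *v x))"
  by (simp add: psd_def inner_cvec)

lemma mv_scaleR: "(A::'n::finite cmat) *v (c *\<^sub>R x) = c *\<^sub>R (A *v x)"
  using linear_iff matrix_vector_mul_linear by blast

lemma scaleR_mv: "((c::real) *\<^sub>R (A::'n::finite cmat)) *v x = c *\<^sub>R (A *v x)"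
  by (simp add: vec_eq_iff matrix_vector_mult_def scaleR_sum_right)

lemma csum_adj: "(\<Sum>i\<in>UNIV. cnj (x$i) * (A *v y)$i) = (\<Sum>j\<in>UNIV. cnj ((adj A *v x)$j) * y$j)"
proof -
  have "(\<Sum>i\<in>UNIV. cnj (x$i) * (A *v y)$i) = (\<Sum>i\<in>UNIV. \<Sum>j\<in>UNIV. cnj (x$i) * A$i$j * y$j)"
    by (simp add: matrix_vector_mult_def sum_distrib_left mult.assoc)
  also have "\<dots> = (\<Sum>j\<in>UNIV. \<Sum>i\<in>UNIV. cnj (x$i) * A$i$j * y$j)"
    by (rule sum.swap)
  also have "\<dots> = (\<Sum>j\<in>UNIV. cnj ((adj A *v x)$j) * y$j)"
    by (simp add: matrix_vector_mult_def adj_def sum_distrib_right sum_distrib_left mult.commute mult.left_commute)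
  finally show ?thesis .
qed

lemma inner_adj: "inner x ((A::'n::finite cmat) *v y) = inner (adj A *v x) y"
  by (simp add: inner_cvec csum_adj)

lemma adj_adj[simp]: "adj (adj A) = A"
  by (simp add: adj_def vec_eq_iff)

lemma adj_mult: "adj ((A::'n::finite cmat) ** B) = adj B ** adj A"
  by (simp add: adj_def vec_eq_iff matrix_matrix_mult_def mult.commute)

lemma adj_add: "adj ((A::'n::finite cmat) + B) = adj A + adj B"
  by (simp add: adj_def vec_eq_iff)

lemma adj_diff: "adj ((A::'n::finite cmat) - B) = adj A - adj B"
  by (simp add: adj_def vec_eq_iff)

lemma adj_scaleR: "adj ((c::real) *\<^sub>R (A::'n::finite cmat)) = c *\<^sub>R adj A"
  by (simp add: adj_def vec_eq_iff)

lemma adj_zero[simp]: "adj (0::'n::finite cmat) = 0"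
  by (simp add: adj_def vec_eq_iff)

lemma herm_sym: "hermitian (A::'n::finite cmat) \<Longrightarrow> inner x (A *v y) = inner y (A *v x)"
  by (metis hermitian_def inner_adj inner_commute)

definition Dg :: "('n::finite \<Rightarrow> real) \<Rightarrow> 'n cmat" where
  "Dg a = (\<chi> i j. if i = j then complex_of_real (a i) else 0)"

lemma if_mult0: "(if P then (c::complex) else 0) * y = (if P then c * y else 0)"
  by simp

lemma Dg_mv: "Dg a *v x = (\<chi> i. complex_of_real (a i) * x$i)"
  by (simp add: Dg_def matrix_vector_mult_def vec_eq_iff if_mult0 cong: if_cong)

lemma adj_Dg[simp]: "adj (Dg a) = Dg a"
  by (simp add: adj_def Dg_def vec_eq_iff)

lemma Dg_comm: "Dg a *v (Dg b *v x) = Dg b *v (Dg a *v x)"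
  by (simp add: Dg_mv vec_eq_iff)

lemma Proj_Dg: "Proj I = Dg (\<lambda>i. if i \<in> I then 1 else 0)"
  by (simp add: Proj_def Dg_def vec_eq_iff)

lemma Dinvsqrt_Dg: "Dinvsqrt \<rho> = Dg (\<lambda>i. if Re (\<rho>$i$i) > 0 then 1 / sqrt (Re (\<rho>$i$i)) else 0)"
  by (simp add: Dinvsqrt_def Dg_def vec_eq_iff)

lemma herm_diag: "hermitian A \<Longrightarrow> A$i$i = complex_of_real (Re (A$i$i))"
proof -
  assume "hermitian A"
  then have "adj A $ i $ i = A$i$i" unfolding hermitian_def by simp
  then have "cnj (A$i$i) = A$i$i" unfolding adj_def by simp
  then have "Im (cnj (A$i$i)) = Im (A$i$i)" by simp
  then have "Im (A$i$i) = 0" by simp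
  then show ?thesis by (simp add: complex_eq_iff)
qed

lemma Dephase_Dg: "hermitian A \<Longrightarrow> Dephase A = Dg (\<lambda>i. Re (A$i$i))"
  by (simp add: Dephase_def Dg_def vec_eq_iff) (metis herm_diag)

lemma inner_Dg: "inner x (Dg a *v x) = (\<Sum>i\<in>UNIV. a i * (cmod (x$i))^2)"
proof -
  have "\<And>i. Re (cnj (x$i) * (complex_of_real (a i) * x$i)) = a i * (cmod (x$i))^2"
  proof -
    fix i
    have "cnj (x$i) * (complex_of_real (a i) * x$i) = complex_of_real (a i) * (cnj (x$i) * x$i)"
      by (simp add: algebra_simps)
    also have "cnj (x$i) * x$i = complex_of_real ((cmod (x$i))^2)"
      by (simp add: complex_mult_cnj mult.commute cmod_def power2_eq_square)
    finally show "Re (cnj (x$i) * (complex_of_real (a i) * x$i)) = a i * (cmod (x$i))^2"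
      by (simp only: Re_complex_of_real of_real_mult[symmetric])
  qed
  then show ?thesis unfolding inner_cvec Dg_mv vec_lambda_beta Re_sum by (rule sum.cong[OF refl])
qed


abbreviation qf :: "'n::finite cmat \<Rightarrow> complex^'n \<Rightarrow> real" where
  "qf A x \<equiv> inner x (A *v x)"

lemma qf_expand: "qf A (u + t *\<^sub>R v) = qf A u + t * (inner u (A *v v) + inner v (A *v u)) + t^2 * qf A v"
  by (simp add: matrix_vector_right_distrib mv_scaleR inner_add_left inner_add_right algebra_simps power2_eq_square)

lemma qf_diff: "qf A (u - v) = qf A u - inner u (A *v v) - inner v (A *v u) + qf A v"
  by (simp add: matrix_vector_mult_diff_distrib inner_diff_left inner_diff_right algebra_simps)

lemma psd_CS:
  assumes "psd A"
  shows "(inner u (A *v v))^2 \<le> qf A u * qf A v"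
proof -
  have h: "hermitian A" and pos: "\<And>x. 0 \<le> qf A x" using assms by (auto simp: psd_iff)
  define a where "a = qf A u"
  define b where "b = inner u (A *v v)"
  define c where "c = qf A v"
  have sym: "inner v (A *v u) = b" unfolding b_def using herm_sym[OF h] by simp
  have key: "\<And>t. 0 \<le> a + 2 * t * b + t^2 * c"
  proof -
    fix t
    have "0 \<le> qf A (u + t *\<^sub>R v)" by (rule pos)
    then show "0 \<le> a + 2 * t * b + t^2 * c"
      unfolding qf_expand a_def c_def sym by (simp add: b_def algebra_simps)
  qed
  have c0: "0 \<le> c" unfolding c_def by (rule pos)
  have a0: "0 \<le> a" unfolding a_def by (rule pos)
  show ?thesis
  proof (cases "c = 0")
    case True
    have "b = 0"
    proof (rule ccontr)
      assume "b \<noteq> 0"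
      have "0 \<le> a + 2 * (- (a + 1) / (2 * b)) * b + (- (a + 1) / (2 * b))^2 * c" by (rule key)
      also have "\<dots> = -1" using True \<open>b \<noteq> 0\<close> by (simp add: field_simps)
      finally show False by simp
    qed
    then show ?thesis using True a0 by (simp add: a_def b_def c_def)
  next
    case False
    then have cpos: "0 < c" using c0 by simp
    have "0 \<le> a + 2 * (- b / c) * b + (- b / c)^2 * c" by (rule key)
    also have "\<dots> = a - b^2 / c" using cpos by (simp add: field_simps power2_eq_square)
    finally have "b^2 / c \<le> a" by simp
    then have "b^2 \<le> a * c" using cpos by (simp add: divide_le_eq)
    then show ?thesis by (simp add: a_def b_def c_def)
  qed
qed

lemma opnorm_le_qf:
  assumes "psd B" "0 \<le> c" "\<And>y. qf B y \<le> c * (norm y)^2"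
  shows "opnorm B \<le> c"
  unfolding opnorm_def
proof (rule onorm_le)
  fix y :: "complex^'a"
  define u where "u = B *v y"
  have pos: "\<And>x. 0 \<le> qf B x" using assms(1) by (auto simp: psd_iff)
  have "(inner u (B *v y))^2 \<le> qf B u * qf B y" by (rule psd_CS[OF assms(1)])
  also have "\<dots> \<le> (c * (norm u)^2) * (c * (norm y)^2)"
    by (rule mult_mono[OF assms(3) assms(3)]) (use pos assms(2) in auto)
  finally have "(norm u)^2 * (norm u)^2 \<le> (norm u)^2 * (c * norm y)^2"
    by (simp add: u_def power2_norm_eq_inner[symmetric] power2_eq_square algebra_simps)
  note prev = this
  have "(norm u)^2 \<le> (c * norm y)^2"
  proof (cases "u = 0")
    case True then show ?thesis by simp
  next
    case False
    then have "0 < (norm u)^2" by simp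
    then show ?thesis by (rule mult_left_le_imp_le[OF prev])
  qed
  then have "norm u \<le> c * norm y"
    by (rule power2_le_imp_le) (use assms(2) in simp)
  then show "norm (B *v y) \<le> c * norm y" by (simp add: u_def)
qed

lemma qf_le_opnorm: "qf B y \<le> opnorm B * (norm y)^2"
proof -
  have "qf B y \<le> norm y * norm (B *v y)" by (rule norm_cauchy_schwarz)
  also have "\<dots> \<le> norm y * (opnorm B * norm y)"
    unfolding opnorm_def
    by (rule mult_left_mono[OF onorm]) (auto intro: matrix_vector_mul_bounded_linear)
  finally show ?thesis by (simp add: power2_eq_square algebra_simps)
qed

lemma opnorm_nonneg: "0 \<le> opnorm (B::'n::finite cmat)"
  unfolding opnorm_def by (rule onorm_pos_le) (rule matrix_vector_mul_bounded_linear)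

lemma if_mult0r: "(y::complex) * (if P then c else 0) = (if P then y * c else 0)"
  by simp

lemma mv_axis: "((A::'n::finite cmat) *v axis i a)$j = A$j$i * a"
  by (simp add: matrix_vector_mult_def axis_def if_mult0r cong: if_cong)

lemma qf_axis: "qf A (axis i a) = (cmod a)^2 * Re (A$i$i)"
proof -
  have "qf A (axis i a) = inner a ((A *v axis i a)$i)" by (rule inner_axis')
  also have "\<dots> = Re (cnj a * (A$i$i * a))" by (simp add: mv_axis inner_complex_def)
  also have "cnj a * (A$i$i * a) = A$i$i * complex_of_real ((cmod a)^2)"
    by (simp add: complex_mult_cnj mult.commute mult.left_commute cmod_def power2_eq_square)
  finally show ?thesis by simp
qed

lemma psd_diag_nonneg: "psd A \<Longrightarrow> 0 \<le> Re (A$i$i)"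
proof -
  assume "psd A"
  then have "0 \<le> qf A (axis i 1)" by (simp add: psd_iff)
  then show ?thesis by (simp add: qf_axis)
qed

lemma psd_zero_row:
  assumes "psd A" "Re (A$i$i) = 0"
  shows "(A *v z)$i = 0"
proof -
  have r: "inner (axis i a) (A *v z) = 0" for a
  proof -
    have "(inner (axis i a) (A *v z))^2 \<le> qf A (axis i a) * qf A z" by (rule psd_CS[OF assms(1)])
    also have "\<dots> = 0" using assms(2) by (simp add: qf_axis)
    finally show ?thesis by simp
  qed
  have "Re ((A *v z)$i) = 0" using r[of 1] by (simp add: inner_axis' inner_complex_def)
  moreover have "Im ((A *v z)$i) = 0" using r[of \<i>] by (simp add: inner_axis' inner_complex_def)
  ultimately show ?thesis by (simp add: complex_eq_iff)
qed

definition supp1 :: "'n::finite cmat \<Rightarrow> 'n \<Rightarrow> real" where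
  "supp1 A i = (if Re (A$i$i) > 0 then 1 else 0)"

lemma qf_support:
  assumes "psd A"
  shows "qf A z = qf A (Dg (supp1 A) *v z)"
proof -
  have h: "hermitian A" using assms by (simp add: psd_iff)
  define z1 where "z1 = Dg (supp1 A) *v z"
  define w where "w = z - z1"
  have w0: "inner w (A *v v) = 0" for v
  proof -
    have "inner (w$i) ((A *v v)$i) = 0" for i
    proof (cases "Re (A$i$i) > 0")
      case True
      then have "w$i = 0" by (simp add: w_def z1_def Dg_mv supp1_def)
      then show ?thesis by simp
    next
      case False
      then have "Re (A$i$i) = 0" using psd_diag_nonneg[OF assms, of i] by simp
      then show ?thesis using psd_zero_row[OF assms] by simp
    qed
    then show ?thesis by (simp add: inner_vec_def)
  qed
  have "z = z1 + w" by (simp add: w_def)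
  then have "qf A z = qf A z1 + inner z1 (A *v w) + inner w (A *v z1) + qf A w"
    by (simp add: matrix_vector_right_distrib inner_add_left inner_add_right)
  also have "inner z1 (A *v w) = 0" using herm_sym[OF h] w0 by metis
  finally show ?thesis using w0 by (simp add: z1_def)
qed


definition dq :: "'n::finite cmat \<Rightarrow> 'n \<Rightarrow> real" where
  "dq A i = (if Re (A$i$i) > 0 then 1 / sqrt (Re (A$i$i)) else 0)"

definition pI :: "'n set \<Rightarrow> 'n \<Rightarrow> real" where
  "pI I i = (if i \<in> I then 1 else 0)"

lemma Dinvsqrt_Dg': "Dinvsqrt A = Dg (dq A)"
  by (simp add: Dinvsqrt_Dg dq_def[abs_def])

lemma Proj_Dg': "Proj I = Dg (pI I)"
  by (simp add: Proj_Dg pI_def[abs_def])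

lemma norm_sq: "(norm (y::complex^'n::finite))^2 = (\<Sum>i\<in>UNIV. (cmod (y$i))^2)"
  by (simp add: norm_vec_def L2_set_def sum_nonneg)

lemma inner_Dg_sym: "inner x (Dg a *v y) = inner (Dg a *v x) y"
  by (simp add: inner_adj)

lemma herm_Dg_conj: "hermitian X \<Longrightarrow> hermitian (Dg a ** X ** Dg a)"
  unfolding hermitian_def by (simp add: adj_mult matrix_mul_assoc)

lemma Rmat_Dg: "Rmat A = Dg (dq A) ** A ** Dg (dq A)"
  by (simp add: Rmat_def Dinvsqrt_Dg')

lemma qf_PRP: "qf (Proj I ** Rmat A ** Proj I) y = qf A (Dg (dq A) *v (Proj I *v y))"
proof -
  have "qf (Proj I ** Rmat A ** Proj I) y
      = inner y (Dg (pI I) *v (Dg (dq A) *v (A *v (Dg (dq A) *v (Dg (pI I) *v y)))))"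
    by (simp add: Proj_Dg' Rmat_Dg matrix_vector_mul_assoc[symmetric])
  also have "\<dots> = inner (Dg (pI I) *v y) (Dg (dq A) *v (A *v (Dg (dq A) *v (Dg (pI I) *v y))))"
    by (rule inner_Dg_sym)
  also have "\<dots> = qf A (Dg (dq A) *v (Proj I *v y))"
    by (simp add: inner_Dg_sym Proj_Dg')
  finally show ?thesis .
qed

lemma psd_PRP:
  assumes "psd A"
  shows "psd (Proj I ** Rmat A ** Proj I)"
proof -
  have h: "hermitian A" using assms by (simp add: psd_iff)
  have "hermitian (Proj I ** Rmat A ** Proj I)"
    unfolding Proj_Dg' Rmat_Dg by (intro herm_Dg_conj h)
  moreover have "0 \<le> qf (Proj I ** Rmat A ** Proj I) y" for y
    unfolding qf_PRP using assms by (simp add: psd_iff)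
  ultimately show ?thesis by (simp add: psd_iff)
qed

lemma qf_Dephase: "hermitian A \<Longrightarrow> qf (Dephase A) x = (\<Sum>i\<in>UNIV. Re (A$i$i) * (cmod (x$i))^2)"
  by (simp add: Dephase_Dg inner_Dg)

lemma core:
  assumes "psd A" "0 \<le> c"
  shows "opnorm (Proj I ** Rmat A ** Proj I) \<le> c \<longleftrightarrow>
         (\<forall>x. qf A (Proj I *v x) \<le> c * qf (Dephase A) x)"
proof -
  have h: "hermitian A" using assms by (simp add: psd_iff)
  have d0: "\<And>i. 0 \<le> Re (A$i$i)" using psd_diag_nonneg[OF assms(1)] by blast
  show ?thesis
  proof
    assume on: "opnorm (Proj I ** Rmat A ** Proj I) \<le> c"
    show "\<forall>x. qf A (Proj I *v x) \<le> c * qf (Dephase A) x"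
    proof
      fix x
      define y where "y = Dg (\<lambda>i. sqrt (Re (A$i$i))) *v x"
      have e1: "Dg (dq A) *v (Proj I *v y) = Dg (supp1 A) *v (Proj I *v x)"
        using d0 by (auto simp: vec_eq_iff y_def Dg_mv Proj_Dg' dq_def supp1_def pI_def)
      have "qf A (Proj I *v x) = qf (Proj I ** Rmat A ** Proj I) y"
        unfolding qf_PRP e1 by (rule qf_support[OF assms(1)])
      also have "\<dots> \<le> opnorm (Proj I ** Rmat A ** Proj I) * (norm y)^2" by (rule qf_le_opnorm)
      also have "\<dots> \<le> c * (norm y)^2" by (rule mult_right_mono[OF on]) simp
      also have "(norm y)^2 = qf (Dephase A) x"
        using d0 by (simp add: norm_sq qf_Dephase[OF h] y_def Dg_mv norm_mult power_mult_distrib)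
      finally show "qf A (Proj I *v x) \<le> c * qf (Dephase A) x" .
    qed
  next
    assume H: "\<forall>x. qf A (Proj I *v x) \<le> c * qf (Dephase A) x"
    show "opnorm (Proj I ** Rmat A ** Proj I) \<le> c"
    proof (rule opnorm_le_qf[OF psd_PRP[OF assms(1)] assms(2)])
      fix y
      have cm: "Dg (dq A) *v (Proj I *v y) = Proj I *v (Dg (dq A) *v y)"
        unfolding Proj_Dg' by (rule Dg_comm)
      have "qf (Proj I ** Rmat A ** Proj I) y = qf A (Proj I *v (Dg (dq A) *v y))"
        by (simp only: qf_PRP cm)
      also have "\<dots> \<le> c * qf (Dephase A) (Dg (dq A) *v y)" using H by blast
      also have "qf (Dephase A) (Dg (dq A) *v y) \<le> (norm y)^2"
        unfolding qf_Dephase[OF h] norm_sq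
      proof (rule sum_mono)
        fix i
        show "Re (A$i$i) * (cmod ((Dg (dq A) *v y)$i))^2 \<le> (cmod (y$i))^2"
          using d0[of i]
          by (simp add: Dg_mv dq_def norm_mult power_mult_distrib power_divide)
      qed
      then have "c * qf (Dephase A) (Dg (dq A) *v y) \<le> c * (norm y)^2"
        by (rule mult_left_mono) (rule assms(2))
      finally show "qf (Proj I ** Rmat A ** Proj I) y \<le> c * (norm y)^2" .
    qed
  qed
qed

lemma mv_sum: "(A::'n::finite cmat) *v sum v S = (\<Sum>j\<in>S. A *v v j)"
  by (induct S rule: infinite_finite_induct) (simp_all add: matrix_vector_right_distrib)

lemma qf_sum_le:
  assumes "psd A" "finite S"
  shows "qf A (\<Sum>i\<in>S. v i) \<le> real (card S) * (\<Sum>i\<in>S. qf A (v i))"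
proof -
  have h: "hermitian A" using assms by (simp add: psd_iff)
  have b: "inner (v i) (A *v v j) \<le> (qf A (v i) + qf A (v j)) / 2" for i j
  proof -
    have "0 \<le> qf A (v i - v j)" using assms(1) by (simp add: psd_iff)
    then show ?thesis unfolding qf_diff using herm_sym[OF h, of "v j" "v i"] by simp
  qed
  have "qf A (\<Sum>i\<in>S. v i) = (\<Sum>i\<in>S. \<Sum>j\<in>S. inner (v i) (A *v v j))"
    by (simp only: mv_sum inner_sum_left) (simp only: inner_sum_right)
  also have "\<dots> \<le> (\<Sum>i\<in>S. \<Sum>j\<in>S. (qf A (v i) + qf A (v j)) / 2)"
    by (intro sum_mono b)
  also have "\<dots> = (\<Sum>i\<in>S. (real (card S) * qf A (v i) + (\<Sum>j\<in>S. qf A (v j))) / 2)"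
    by (simp add: sum_divide_distrib[symmetric] sum.distrib)
  also have "\<dots> = real (card S) * (\<Sum>i\<in>S. qf A (v i))"
    by (simp add: sum_divide_distrib[symmetric] sum.distrib sum_distrib_left sum_distrib_right mult.commute)
  finally show ?thesis .
qed

lemma PRP_le_card:
  assumes "psd A"
  shows "opnorm (Proj I ** Rmat A ** Proj I) \<le> real (card I)"
proof (rule opnorm_le_qf[OF psd_PRP[OF assms]])
  show "0 \<le> real (card I)" by simp
  fix y
  have d0: "\<And>i. 0 \<le> Re (A$i$i)" using psd_diag_nonneg[OF assms(1)] by blast
  have e: "Dg (dq A) *v (Proj I *v y) = (\<Sum>i\<in>I. axis i (complex_of_real (dq A i) * y$i))"
    by (simp add: vec_eq_iff Dg_mv Proj_Dg' pI_def axis_def)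
  have "qf (Proj I ** Rmat A ** Proj I) y \<le> real (card I) * (\<Sum>i\<in>I. qf A (axis i (complex_of_real (dq A i) * y$i)))"
    unfolding qf_PRP e by (rule qf_sum_le[OF assms]) simp
  also have "(\<Sum>i\<in>I. qf A (axis i (complex_of_real (dq A i) * y$i))) \<le> (\<Sum>i\<in>I. (cmod (y$i))^2)"
  proof (rule sum_mono)
    fix i
    show "qf A (axis i (complex_of_real (dq A i) * y$i)) \<le> (cmod (y$i))^2"
      using d0[of i] by (simp add: qf_axis dq_def norm_mult power_mult_distrib power_divide)
  qed
  also have "\<dots> \<le> (\<Sum>i\<in>UNIV. (cmod (y$i))^2)"
    by (rule sum_mono2) auto
  finally show "qf (Proj I ** Rmat A ** Proj I) y \<le> real (card I) * (norm y)^2"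
    unfolding norm_sq by (simp add: mult_left_mono)
qed


abbreviation cI :: "'n::finite set \<Rightarrow> 'n cmat \<Rightarrow> real" where
  "cI I A \<equiv> opnorm (Proj I ** Rmat A ** Proj I)"

definition MM :: "nat \<Rightarrow> 'n::finite cmat \<Rightarrow> real" where
  "MM k A = Max ((\<lambda>I. cI I A) ` {I. card I \<le> k})"

lemma mu_MM: "mu k A = log 2 (MM k A)"
  by (simp add: mu_def MM_def)

lemma finF: "finite {I::'n::finite set. card I \<le> k}"
  by (rule finite_subset[of _ UNIV]) auto

lemma MM_le_iff: "MM k A \<le> c \<longleftrightarrow> (\<forall>I. card I \<le> k \<longrightarrow> cI I A \<le> c)"
proof -
  have ne: "{I::'a set. card I \<le> k} \<noteq> {}" by (auto intro: exI[of _ "{}"])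
  show ?thesis unfolding MM_def using finF[of k] ne by (subst Max_le_iff) auto
qed

lemma MM_ge: "card I \<le> k \<Longrightarrow> cI I A \<le> MM k A"
  unfolding MM_def by (rule Max_ge) (use finF in auto)

lemma MM_nonneg: "0 \<le> MM k A"
  using MM_ge[of "{}" k A] opnorm_nonneg[of "Proj {} ** Rmat A ** Proj {}"] by simp

lemma state_pos_diag: "is_state A \<Longrightarrow> \<exists>i. 0 < Re (A$i$i)"
proof (rule ccontr)
  assume s: "is_state A" and n: "\<not> (\<exists>i. 0 < Re (A$i$i))"
  have "Re (ctrace A) = (\<Sum>i\<in>UNIV. Re (A$i$i))" by (simp add: ctrace_def)
  also have "\<dots> \<le> 0" using n by (intro sum_nonpos) (simp add: not_less)
  finally show False using s by (simp add: is_state_def)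
qed

lemma MM_ge1:
  assumes "is_state A" "1 \<le> k"
  shows "1 \<le> MM k A"
proof -
  obtain i where i: "0 < Re (A$i$i)" using state_pos_diag[OF assms(1)] by blast
  have e: "Dg (dq A) *v (Proj {i} *v axis i 1) = axis i (complex_of_real (dq A i))"
    by (simp add: vec_eq_iff Dg_mv Proj_Dg' pI_def axis_def)
  have "qf (Proj {i} ** Rmat A ** Proj {i}) (axis i 1) = 1"
    unfolding qf_PRP e qf_axis using i by (simp add: dq_def power_divide norm_divide)
  then have "1 \<le> cI {i} A * (norm (axis i (1::complex)))^2"
    using qf_le_opnorm[where B="Proj {i} ** Rmat A ** Proj {i}" and y="axis i 1"] by simp
  also have "norm (axis i (1::complex)) = 1" by (simp add: inner_axis' norm_eq_1)
  finally have "1 \<le> cI {i} A" by simp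
  also have "\<dots> \<le> MM k A" using assms(2) by (intro MM_ge) simp
  finally show ?thesis .
qed

lemma MM_le_k:
  assumes "psd A"
  shows "MM k A \<le> real k"
  unfolding MM_le_iff
proof (intro allI impI)
  fix I :: "'a set" assume "card I \<le> k"
  then show "cI I A \<le> real k" using PRP_le_card[OF assms, of I] by simp
qed

lemma loewner_iff:
  assumes "hermitian A"
  shows "loewner_le (Proj I ** A ** Proj I) (c *\<^sub>R Dephase A) \<longleftrightarrow>
         (\<forall>x. qf A (Proj I *v x) \<le> c * qf (Dephase A) x)"
proof -
  have herm: "hermitian (c *\<^sub>R Dephase A - Proj I ** A ** Proj I)"
    using herm_Dg_conj[OF assms, of "pI I"]
    unfolding hermitian_def Dephase_Dg[OF assms] adj_diff adj_scaleR Proj_Dg' by simp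
  have q: "qf (c *\<^sub>R Dephase A - Proj I ** A ** Proj I) x = c * qf (Dephase A) x - qf A (Proj I *v x)" for x
  proof -
    have "qf (Proj I ** A ** Proj I) x = qf A (Proj I *v x)"
      by (simp add: matrix_vector_mul_assoc[symmetric] Proj_Dg' inner_Dg_sym)
    then show ?thesis
      by (simp add: matrix_vector_mult_diff_rdistrib scaleR_mv inner_diff_right)
  qed
  show ?thesis unfolding loewner_le_def psd_iff q using herm by auto
qed

lemma MM_le_char:
  assumes "psd A" "0 \<le> c"
  shows "MM k A \<le> c \<longleftrightarrow> (\<forall>I. card I \<le> k \<longrightarrow> loewner_le (Proj I ** A ** Proj I) (c *\<^sub>R Dephase A))"
proof -
  have h: "hermitian A" using assms by (simp add: psd_iff)
  show ?thesis unfolding MM_le_iff loewner_iff[OF h] core[OF assms] ..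
qed

lemma part_a:
  assumes "is_state A" "1 \<le> k"
  shows "0 \<le> mu k A \<and> mu k A \<le> log 2 (real k)"
proof -
  have p: "psd A" using assms by (simp add: is_state_def)
  have 1: "1 \<le> MM k A" by (rule MM_ge1[OF assms])
  have 2: "MM k A \<le> real k" by (rule MM_le_k[OF p])
  show ?thesis unfolding mu_MM using 1 2 by simp
qed

lemma part_b:
  assumes "is_state A" "1 \<le> k"
  shows "mu k A = Inf {\<nu>::real. \<forall>I. card I \<le> k \<longrightarrow>
              loewner_le (Proj I ** A ** Proj I) ((2 powr \<nu>) *\<^sub>R Dephase A)}"
proof -
  have p: "psd A" using assms by (simp add: is_state_def)
  have 1: "1 \<le> MM k A" by (rule MM_ge1[OF assms])
  have "{\<nu>::real. \<forall>I. card I \<le> k \<longrightarrow>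
              loewner_le (Proj I ** A ** Proj I) ((2 powr \<nu>) *\<^sub>R Dephase A)} = {mu k A..}"
  proof (rule set_eqI)
    fix \<nu> :: real
    have "(\<forall>I. card I \<le> k \<longrightarrow> loewner_le (Proj I ** A ** Proj I) ((2 powr \<nu>) *\<^sub>R Dephase A))
          \<longleftrightarrow> MM k A \<le> 2 powr \<nu>"
      using MM_le_char[OF p, of "2 powr \<nu>" k] by simp
    also have "\<dots> \<longleftrightarrow> mu k A \<le> \<nu>" unfolding mu_MM using 1 by (simp add: log_le_iff)
    finally show "\<nu> \<in> {\<nu>. \<forall>I. card I \<le> k \<longrightarrow> loewner_le (Proj I ** A ** Proj I) ((2 powr \<nu>) *\<^sub>R Dephase A)}
        \<longleftrightarrow> \<nu> \<in> {mu k A..}" by simp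
  qed
  then show ?thesis by simp
qed


lemma qf_entries: "qf (S::'n::finite cmat) w = (\<Sum>i\<in>UNIV. \<Sum>j\<in>UNIV. inner (w$i) (S$i$j * w$j))"
  by (simp add: inner_vec_def matrix_vector_mult_def inner_sum_right)

lemma Dephase_mv: "Dephase S *v x = (\<chi> i. S$i$i * x$i)"
  by (simp add: Dephase_def matrix_vector_mult_def vec_eq_iff if_mult0 cong: if_cong)

lemma qf_Dephase_entries: "qf (Dephase (S::'n::finite cmat)) x = (\<Sum>i\<in>UNIV. inner (x$i) (S$i$i * x$i))"
  by (simp add: Dephase_mv inner_vec_def)

lemma part_d:
  assumes "1 \<le> k"
  shows "lsc_on {\<rho>::'n::finite cmat. is_state \<rho>} (mu k)"
  unfolding lsc_on_def
proof (intro ballI allI impI)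
  fix \<rho> :: "'n cmat" and t :: real
  assume r: "\<rho> \<in> {\<rho>. is_state \<rho>}" and lt: "t < mu k \<rho>"
  let ?S = "{\<rho>::'n cmat. is_state \<rho>}"
  have st: "is_state \<rho>" using r by simp
  have p: "psd \<rho>" using st by (simp add: is_state_def)
  have h: "hermitian \<rho>" using p by (simp add: psd_iff)
  have 1: "1 \<le> MM k \<rho>" by (rule MM_ge1[OF st assms])
  have "2 powr t < MM k \<rho>" using lt 1 unfolding mu_MM by (simp add: less_log_iff)
  then have "\<not> MM k \<rho> \<le> 2 powr t" by simp
  then obtain I where I: "card I \<le> k" "\<not> loewner_le (Proj I ** \<rho> ** Proj I) ((2 powr t) *\<^sub>R Dephase \<rho>)"
    using MM_le_char[OF p, of "2 powr t" k] by auto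
  then obtain x where x: "2 powr t * qf (Dephase \<rho>) x < qf \<rho> (Proj I *v x)"
    using loewner_iff[OF h] by (auto simp: not_le)
  define w where "w = Proj I *v x"
  define g where "g = (\<lambda>S::'n cmat. (\<Sum>i\<in>UNIV. \<Sum>j\<in>UNIV. inner (w$i) (S$i$j * w$j))
                        - 2 powr t * (\<Sum>i\<in>UNIV. inner (x$i) (S$i$i * x$i)))"
  have g_eq: "g S = qf S (Proj I *v x) - 2 powr t * qf (Dephase S) x" for S
  proof -
    have a: "qf (Dephase S) x = (\<Sum>i\<in>UNIV. inner (x$i) (S$i$i * x$i))" by (rule qf_Dephase_entries)
    have b: "qf S w = (\<Sum>i\<in>UNIV. \<Sum>j\<in>UNIV. inner (w$i) (S$i$j * w$j))" by (rule qf_entries)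
    show ?thesis unfolding g_def a b[unfolded w_def] w_def ..
  qed
  have "(g \<longlongrightarrow> g \<rho>) (at \<rho> within ?S)"
    unfolding g_def
    by (intro tendsto_intros tendsto_vec_nth tendsto_ident_at)
  moreover have "0 < g \<rho>" using x g_eq[of \<rho>] by simp
  ultimately have ev: "\<forall>\<^sub>F S in at \<rho> within ?S. 0 < g S"
    by (rule order_tendstoD)
  have evS: "\<forall>\<^sub>F S in at \<rho> within ?S. S \<in> ?S"
    by (simp add: eventually_at_filter)
  show "\<forall>\<^sub>F S in at \<rho> within ?S. t < mu k S"
    using ev evS
  proof eventually_elim
    case (elim S)
    then have sS: "is_state S" by simp
    have pS: "psd S" using sS by (simp add: is_state_def)
    have hS: "hermitian S" using pS by (simp add: psd_iff)
    have 1: "1 \<le> MM k S" by (rule MM_ge1[OF sS assms])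
    show "t < mu k S"
    proof (rule ccontr)
      assume "\<not> t < mu k S"
      then have "MM k S \<le> 2 powr t" using 1 unfolding mu_MM by (simp add: log_le_iff not_less)
      then have "loewner_le (Proj I ** S ** Proj I) ((2 powr t) *\<^sub>R Dephase S)"
        using MM_le_char[OF pS, of "2 powr t" k] I(1) by auto
      then have "qf S (Proj I *v x) \<le> 2 powr t * qf (Dephase S) x"
        using loewner_iff[OF hS] by blast
      then show False using elim g_eq[of S] by simp
    qed
  qed
qed


lemma psd_add: "psd A \<Longrightarrow> psd B \<Longrightarrow> psd (A + B)"
  by (simp add: psd_iff hermitian_def adj_add matrix_vector_mult_add_rdistrib inner_add_right add_nonneg_nonneg)

lemma psd_zero: "psd (0::'n::finite cmat)"
  by (simp add: psd_iff hermitian_def)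

lemma psd_sandwich:
  assumes "psd A"
  shows "psd (K ** A ** adj K)"
proof -
  have h: "hermitian A" using assms by (simp add: psd_iff)
  have "hermitian (K ** A ** adj K)"
    using h unfolding hermitian_def by (simp add: adj_mult matrix_mul_assoc)
  moreover have "0 \<le> qf (K ** A ** adj K) x" for x
  proof -
    have "qf (K ** A ** adj K) x = qf A (adj K *v x)"
      by (simp add: matrix_vector_mul_assoc[symmetric] inner_adj)
    then show ?thesis using assms by (simp add: psd_iff)
  qed
  ultimately show ?thesis by (simp add: psd_iff)
qed

lemma Dephase_add: "Dephase (A + B) = Dephase A + Dephase B"
  by (simp add: Dephase_def vec_eq_iff)

lemma Dephase_zero: "Dephase (0::'n::finite cmat) = 0"
  by (simp add: Dephase_def vec_eq_iff)

lemma qf_add: "qf (A + B) x = qf A x + qf B x"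
  by (simp add: matrix_vector_mult_add_rdistrib inner_add_right)

lemma incoh_col:
  assumes "incoh_kraus K"
  obtains tau where "\<And>i j. i \<noteq> tau j \<Longrightarrow> K$i$j = 0"
proof -
  have "\<forall>j. \<exists>i. \<forall>i'. i' \<noteq> i \<longrightarrow> K$i'$j = 0"
  proof
    fix j
    obtain i c where e: "K *v axis j 1 = axis i c" using assms unfolding incoh_kraus_def by blast
    have "\<forall>i'. i' \<noteq> i \<longrightarrow> K$i'$j = 0"
    proof (intro allI impI)
      fix i' assume "i' \<noteq> i"
      have "(K *v axis j 1)$i' = K$i'$j" by (simp add: mv_axis)
      then show "K$i'$j = 0" using e \<open>i' \<noteq> i\<close> by (simp add: axis_def)
    qed
    then show "\<exists>i. \<forall>i'. i' \<noteq> i \<longrightarrow> K$i'$j = 0" by blast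
  qed
  then obtain tau where "\<forall>j i'. i' \<noteq> tau j \<longrightarrow> K$i'$j = 0" by metis
  then show ?thesis using that by blast
qed

lemma incoh_row:
  assumes "incoh_kraus (adj K)"
  obtains sg where "\<And>i j. j \<noteq> sg i \<Longrightarrow> K$i$j = 0"
proof -
  obtain sg where s: "\<And>j i. j \<noteq> sg i \<Longrightarrow> adj K$j$i = 0" using incoh_col[OF assms] by blast
  have "j \<noteq> sg i \<Longrightarrow> K$i$j = 0" for i j using s[of j i] by (simp add: adj_def)
  then show ?thesis using that by blast
qed

lemma kraus_step:
  assumes kc: "incoh_kraus K" and kr: "incoh_kraus (adj K)"
    and p: "psd A" and c0: "0 \<le> c"
    and H: "\<And>J z. card J \<le> k \<Longrightarrow> qf A (Proj J *v z) \<le> c * qf (Dephase A) z"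
    and I: "card I \<le> k"
  shows "qf (K ** A ** adj K) (Proj I *v x) \<le> c * qf (Dephase (K ** A ** adj K)) x"
proof -
  have h: "hermitian A" using p by (simp add: psd_iff)
  have d0: "\<And>i. 0 \<le> Re (A$i$i)" using psd_diag_nonneg[OF p] by blast
  obtain tau where tau: "\<And>i j. i \<noteq> tau j \<Longrightarrow> K$i$j = 0" using incoh_col[OF kc] by blast
  obtain sg where sg: "\<And>i j. j \<noteq> sg i \<Longrightarrow> K$i$j = 0" using incoh_row[OF kr] by blast
  have sgI: "\<And>i j. K$i$j \<noteq> 0 \<Longrightarrow> j = sg i" using sg by blast
  define z where "z = adj K *v (Proj I *v x)"
  have zj: "z$j = cnj (K$(tau j)$j) * (pI I (tau j) * x$(tau j))" for j
  proof -
    have "z$j = (\<Sum>i\<in>UNIV. cnj (K$i$j) * (pI I i * x$i))"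
      unfolding z_def Proj_Dg' Dg_mv by (simp add: matrix_vector_mult_def adj_def)
    also have "\<dots> = (\<Sum>i\<in>UNIV. if i = tau j then cnj (K$(tau j)$j) * (pI I (tau j) * x$(tau j)) else 0)"
      by (rule sum.cong) (auto simp: tau)
    finally show ?thesis by simp
  qed
  define Aset where "Aset = {j. tau j \<in> I \<and> K$(tau j)$j \<noteq> 0}"
  have inj: "inj_on tau Aset"
  proof (rule inj_onI)
    fix j j' assume "j \<in> Aset" "j' \<in> Aset" "tau j = tau j'"
    then have "K$(tau j)$j \<noteq> 0" "K$(tau j)$j' \<noteq> 0" unfolding Aset_def by auto
    then have "j = sg (tau j)" "j' = sg (tau j)" by (auto dest: sgI)
    then show "j = j'" by simp
  qed
  have cardA: "card Aset \<le> k"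
  proof -
    have "card Aset \<le> card I"
      by (rule card_inj_on_le[OF inj]) (auto simp: Aset_def)
    then show ?thesis using I by simp
  qed
  have zA: "Proj Aset *v z = z"
    by (auto simp: vec_eq_iff Proj_Dg' Dg_mv pI_def Aset_def zj)
  define g where "g = (\<lambda>i. Re (A$(sg i)$(sg i)) * (cmod (K$i$(sg i)))^2 * (cmod (x$i))^2)"
  have g0: "0 \<le> g i" for i unfolding g_def using d0 by simp
  have "qf (K ** A ** adj K) (Proj I *v x) = qf A z"
    by (simp add: z_def matrix_vector_mul_assoc[symmetric] inner_adj)
  also have "\<dots> = qf A (Proj Aset *v z)" using zA by simp
  also have "\<dots> \<le> c * qf (Dephase A) z" by (rule H[OF cardA])
  also have "qf (Dephase A) z = (\<Sum>j\<in>UNIV. Re (A$j$j) * (cmod (z$j))^2)" by (rule qf_Dephase[OF h])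
  also have "\<dots> = (\<Sum>j\<in>Aset. Re (A$j$j) * (cmod (z$j))^2)"
    by (rule sum.mono_neutral_right) (auto simp: Aset_def zj pI_def)
  also have "\<dots> = (\<Sum>j\<in>Aset. g (tau j))"
  proof (rule sum.cong[OF refl])
    fix j assume j: "j \<in> Aset"
    then have "K$(tau j)$j \<noteq> 0" unfolding Aset_def by auto
    then have "sg (tau j) = j" by (auto dest: sgI)
    then show "Re (A$j$j) * (cmod (z$j))^2 = g (tau j)"
      using j by (simp add: g_def zj Aset_def pI_def norm_mult power_mult_distrib)
  qed
  also have "\<dots> = (\<Sum>i\<in>tau ` Aset. g i)" using sum.reindex[OF inj, of g] by (simp add: o_def)
  also have "\<dots> \<le> (\<Sum>i\<in>UNIV. g i)" by (rule sum_mono2) (auto simp: g0)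
  also have "\<dots> = qf (Dephase (K ** A ** adj K)) x"
  proof -
    have hk: "hermitian (K ** A ** adj K)" using psd_sandwich[OF p] by (simp add: psd_iff)
    have e: "(K ** A ** adj K)$i$i = K$i$(sg i) * A$(sg i)$(sg i) * cnj (K$i$(sg i))" for i
    proof -
      have "(K ** A ** adj K)$i$i = (\<Sum>l\<in>UNIV. (\<Sum>j\<in>UNIV. K$i$j * A$j$l) * cnj (K$i$l))"
        by (simp add: matrix_matrix_mult_def adj_def)
      also have "\<dots> = (\<Sum>l\<in>UNIV. if l = sg i then (K$i$(sg i) * A$(sg i)$l) * cnj (K$i$l) else 0)"
      proof (rule sum.cong[OF refl])
        fix l
        have "(\<Sum>j\<in>UNIV. K$i$j * A$j$l) = (\<Sum>j\<in>UNIV. if j = sg i then K$i$(sg i) * A$(sg i)$l else 0)"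
          by (rule sum.cong) (auto simp: sg)
        then show "(\<Sum>j\<in>UNIV. K$i$j * A$j$l) * cnj (K$i$l) = (if l = sg i then (K$i$(sg i) * A$(sg i)$l) * cnj (K$i$l) else 0)"
          by (auto simp: sg)
      qed
      finally show ?thesis by simp
    qed
    have "Re ((K ** A ** adj K)$i$i) = Re (A$(sg i)$(sg i)) * (cmod (K$i$(sg i)))^2" for i
    proof -
      have "K$i$(sg i) * A$(sg i)$(sg i) * cnj (K$i$(sg i))
            = complex_of_real (Re (A$(sg i)$(sg i))) * (K$i$(sg i) * cnj (K$i$(sg i)))"
        using herm_diag[OF h, of "sg i"] by (simp add: algebra_simps)
      also have "K$i$(sg i) * cnj (K$i$(sg i)) = complex_of_real ((cmod (K$i$(sg i)))^2)"
        by (simp add: complex_mult_cnj cmod_def power2_eq_square)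
      finally show ?thesis using e[of i] by (simp only: Re_complex_of_real of_real_mult[symmetric])
    qed
    then show ?thesis unfolding qf_Dephase[OF hk] g_def by simp
  qed
  finally show ?thesis using c0 by (simp add: mult_left_mono)
qed


lemma sio_sum:
  assumes Ks: "\<forall>K\<in>set Ks. incoh_kraus K \<and> incoh_kraus (adj K)"
    and p: "psd A" and c0: "0 \<le> c"
    and H: "\<And>J z. card J \<le> k \<Longrightarrow> qf A (Proj J *v z) \<le> c * qf (Dephase A) z"
    and I: "card I \<le> k"
  shows "psd (sum_list (map (\<lambda>K. K ** A ** adj K) Ks)) \<and>
         (\<forall>x. qf (sum_list (map (\<lambda>K. K ** A ** adj K) Ks)) (Proj I *v x)
              \<le> c * qf (Dephase (sum_list (map (\<lambda>K. K ** A ** adj K) Ks))) x)"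
  using Ks
proof (induction Ks)
  case Nil
  then show ?case by (simp add: psd_zero Dephase_zero)
next
  case (Cons K Ks)
  then have IH: "psd (sum_list (map (\<lambda>K. K ** A ** adj K) Ks))"
      "\<And>x. qf (sum_list (map (\<lambda>K. K ** A ** adj K) Ks)) (Proj I *v x)
              \<le> c * qf (Dephase (sum_list (map (\<lambda>K. K ** A ** adj K) Ks))) x"
    by auto
  have kK: "incoh_kraus K" "incoh_kraus (adj K)" using Cons.prems by auto
  have st: "qf (K ** A ** adj K) (Proj I *v x) \<le> c * qf (Dephase (K ** A ** adj K)) x" for x
    by (rule kraus_step[OF kK p c0 H I])
  show ?case
  proof
    show "psd (sum_list (map (\<lambda>K. K ** A ** adj K) (K # Ks)))"
      using psd_add[OF psd_sandwich[OF p] IH(1)] by simp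
    show "\<forall>x. qf (sum_list (map (\<lambda>K. K ** A ** adj K) (K # Ks))) (Proj I *v x)
              \<le> c * qf (Dephase (sum_list (map (\<lambda>K. K ** A ** adj K) (K # Ks)))) x"
    proof
      fix x
      show "qf (sum_list (map (\<lambda>K. K ** A ** adj K) (K # Ks))) (Proj I *v x)
              \<le> c * qf (Dephase (sum_list (map (\<lambda>K. K ** A ** adj K) (K # Ks)))) x"
        using add_mono[OF st[of x] IH(2)[of x]]
        by (simp add: qf_add Dephase_add distrib_left)
    qed
  qed
qed

lemma part_c:
  assumes "1 \<le> k" "SIO \<Lambda>" "is_state \<rho>"
  shows "mu k (\<Lambda> \<rho>) \<le> mu k \<rho>"
proof -
  obtain Ks where Ks: "\<forall>K\<in>set Ks. incoh_kraus K \<and> incoh_kraus (adj K)"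
    and L: "\<And>X. \<Lambda> X = sum_list (map (\<lambda>K. K ** X ** adj K) Ks)"
    using assms(2) unfolding SIO_def by blast
  have p: "psd \<rho>" using assms(3) by (simp add: is_state_def)
  define c where "c = MM k \<rho>"
  have c1: "1 \<le> c" unfolding c_def by (rule MM_ge1[OF assms(3,1)])
  then have c0: "0 \<le> c" by simp
  have H: "qf \<rho> (Proj J *v z) \<le> c * qf (Dephase \<rho>) z" if "card J \<le> k" for J z
  proof -
    have "cI J \<rho> \<le> c" unfolding c_def by (rule MM_ge[OF that])
    then show ?thesis using core[OF p c0] by blast
  qed
  have ps: "psd (\<Lambda> \<rho>)" using sio_sum[OF Ks p c0 H, where I="{}"] L by simp
  have "cI I (\<Lambda> \<rho>) \<le> c" if "card I \<le> k" for I
    using sio_sum[OF Ks p c0 H that] L core[OF ps c0, of I] by simp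
  then have le: "MM k (\<Lambda> \<rho>) \<le> MM k \<rho>" unfolding MM_le_iff c_def by blast
  have a: "0 \<le> mu k \<rho>" using part_a[OF assms(3,1)] by simp
  show ?thesis
  proof (cases "MM k (\<Lambda> \<rho>) = 0")
    case True
    then show ?thesis using a by (simp add: mu_MM log_def)
  next
    case False
    then have "0 < MM k (\<Lambda> \<rho>)" using MM_nonneg[of k "\<Lambda> \<rho>"] by simp
    then show ?thesis unfolding mu_MM using le c1 by (simp add: c_def)
  qed
qed

theorem lemma3:
  fixes k :: nat
  assumes "1 \<le> k" and "k \<le> CARD('n::finite)"
  shows "(\<forall>\<rho>::'n cmat. is_state \<rho> \<longrightarrow> 0 \<le> mu k \<rho> \<and> mu k \<rho> \<le> log 2 (real k))
       \<and> (\<forall>\<rho>::'n cmat. is_state \<rho> \<longrightarrow>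
            mu k \<rho> = Inf {\<nu>::real. \<forall>I::'n set. card I \<le> k \<longrightarrow>
                          loewner_le (Proj I ** \<rho> ** Proj I) ((2 powr \<nu>) *\<^sub>R Dephase \<rho>)})
       \<and> (\<forall>(\<Lambda>::'n cmat \<Rightarrow> 'n cmat) \<rho>. SIO \<Lambda> \<longrightarrow> is_state \<rho> \<longrightarrow> mu k (\<Lambda> \<rho>) \<le> mu k \<rho>)
       \<and> lsc_on {\<rho>::'n cmat. is_state \<rho>} (mu k)"
  using part_a[OF _ assms(1)] part_b[OF _ assms(1)] part_c[OF assms(1)] part_d[OF assms(1)]
  by blast

end
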